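(* Let $0<p<1/2$ and $\alpha_p=\frac12\log_2\frac{1}{4p(1-p)}$. There exists a constant $C_p>0$ depending only on $p$ such that for all sufficiently large $n$ (with $pn$ an integer) and all integers $1\le d\le n$, $$\frac{\mathrm{Vol}(n,pn;d)}{\mathrm{Vol}(n,pn)}\le 2^{-\alpha_p d}\cdot C_p\sqrt{n}.$$
   Context: $\Delta$ is Hamming distance on $\mathbb{F}_2^n$, $\mathcal{B}(x,r)=\{y:\Delta(x,y)\le r\}$, $\mathrm{Vol}(n,r)=|\mathcal{B}(0^n,r)|$, and $\mathrm{Vol}(n,pn;d)=|\mathcal{B}(0^n,pn)\cap\mathcal{B}(1^d0^{n-d},pn)|$, the size of the intersection of two Hamming balls of radius $pn$ whose centers are at distance $d$. *)

theory Defs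
  imports "HOL-Analysis.Analysis"
begin

text \<open>Vectors of F_2^n are modelled as boolean lists of length n.\<close>

definition cube :: "nat \<Rightarrow> bool list set" where
  "cube n = {x. length x = n}"

definition hamming :: "bool list \<Rightarrow> bool list \<Rightarrow> nat" where
  "hamming x y = card {i. i < length x \<and> x ! i \<noteq> y ! i}"

definition hball :: "nat \<Rightarrow> bool list \<Rightarrow> nat \<Rightarrow> bool list set" where
  "hball n x r = {y \<in> cube n. hamming x y \<le> r}"

definition Vol :: "nat \<Rightarrow> nat \<Rightarrow> nat" where
  "Vol n r = card (hball n (replicate n False) r)"

definition Vol_int :: "nat \<Rightarrow> nat \<Rightarrow> nat \<Rightarrow> nat" where
  "Vol_int n r d = card (hball n (replicate n False) r
                         \<inter> hball n (replicate d True @ replicate (n - d) False) r)"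

end

theory Submission
  imports Defs "HOL-Probability.Hoeffding"
begin

lemma finite_cube: "finite (cube n)"
proof -
  have "cube n = {xs. set xs \<subseteq> (UNIV::bool set) \<and> length xs = n}" by (auto simp: cube_def)
  thus ?thesis using finite_lists_length_eq[of "UNIV::bool set" n] by simp
qed

lemma sum_Pow_card:
  fixes a :: real
  assumes "finite S"
  shows "(\<Sum>B\<in>Pow S. a ^ card (B - T)) = 2 ^ card (S \<inter> T) * (1 + a) ^ card (S - T)"
  using assms
proof (induction rule: finite_induct)
  case empty
  then show ?case by simp
next
  case (insert s S)
  have disj: "Pow S \<inter> insert s ` Pow S = {}" using insert.hyps by auto
  have inj: "inj_on (insert s) (Pow S)" using insert.hyps by (auto simp: inj_on_def)
  have fin: "finite (Pow S)" using insert.hyps by simp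
  have cardB: "card (insert s B - T) = (if s \<in> T then card (B - T) else Suc (card (B - T)))"
    if "B \<in> Pow S" for B
  proof -
    have "finite B" using that insert.hyps finite_subset by auto
    moreover have "s \<notin> B" using that insert.hyps by auto
    ultimately show ?thesis
      by (cases "s \<in> T") (auto simp: insert_Diff_if)
  qed
  have "(\<Sum>B\<in>Pow (insert s S). a ^ card (B - T))
        = (\<Sum>B\<in>Pow S. a ^ card (B - T)) + (\<Sum>B\<in>insert s ` Pow S. a ^ card (B - T))"
    unfolding Pow_insert using disj fin by (intro sum.union_disjoint) auto
  also have "(\<Sum>B\<in>insert s ` Pow S. a ^ card (B - T)) = (\<Sum>B\<in>Pow S. a ^ card (insert s B - T))"
    using inj by (simp add: sum.reindex)
  also have "\<dots> = (if s \<in> T then 1 else a) * (\<Sum>B\<in>Pow S. a ^ card (B - T))"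
    by (cases "s \<in> T") (auto simp: sum_distrib_left cardB intro!: sum.cong)
  finally show ?case
    using insert.hyps insert.IH
    by (cases "s \<in> T") (auto simp: card_insert_if algebra_simps insert_Diff_if)
qed

lemma ham0: "length y = n \<Longrightarrow> hamming (replicate n False) y = card {i. i < n \<and> y ! i}"
  unfolding hamming_def by (auto intro!: arg_cong[where f=card])

lemma ham1:
  assumes "length y = n" "d \<le> n"
  shows "hamming (replicate d True @ replicate (n - d) False) y
         = card (({..<d} - {i. i < n \<and> y ! i}) \<union> ({i. i < n \<and> y ! i} - {..<d}))"
  unfolding hamming_def using assms
  by (auto simp: nth_append intro!: arg_cong[where f=card])

lemma vol_int_bound:
  fixes x :: real
  assumes dn: "d \<le> n" and x1: "x \<ge> 1"
  shows "real (Vol_int n r d) \<le> 2^d * x powr (real r - real d/2) * (1 + 1/x)^(n-d)"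
proof -
  define T where "T y = {i. i < n \<and> y ! i}" for y :: "bool list"
  define w where "w B = x powr (real r - real d/2) * (1/x)^card(B - {..<d})" for B :: "nat set"
  define I where "I = hball n (replicate n False) r
                         \<inter> hball n (replicate d True @ replicate (n - d) False) r"
  have xpos: "x > 0" using x1 by simp
  have wnn: "w B \<ge> 0" for B using xpos by (simp add: w_def)
  have w1: "1 \<le> w (T y)" if "y \<in> I" for y
  proof -
    have ly: "length y = n" using that by (simp add: I_def hball_def cube_def)
    have finT: "finite (T y)" by (simp add: T_def)
    define a where "a = card (T y \<inter> {..<d})"
    define e where "e = card (T y - {..<d})"
    have h0: "card (T y) \<le> r" using that ly ham0[OF ly] by (simp add: I_def hball_def T_def)
    have h1: "card (({..<d} - T y) \<union> (T y - {..<d})) \<le> r"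
      using that ly ham1[OF ly dn] by (simp add: I_def hball_def T_def)
    have cT: "card (T y) = a + e" unfolding a_def e_def using finT
      by (metis card_Int_Diff)
    have cD: "card ({..<d} - T y) = d - a"
    proof -
      have "{..<d} - T y = {..<d} - (T y \<inter> {..<d})" by auto
      thus ?thesis unfolding a_def by (simp add: card_Diff_subset)
    qed
    have ad: "a \<le> d" unfolding a_def by (metis card_lessThan card_mono finite_lessThan inf_le2)
    have "card (({..<d} - T y) \<union> (T y - {..<d})) = (d - a) + e"
      unfolding e_def using cD finT by (subst card_Un_disjoint) auto
    with h1 h0 cT ad have ineq: "2 * e + d \<le> 2 * r" by linarith
    have "w (T y) = x powr (real r - real d/2 - real e)"
    proof -
      have "x powr (real r - real d/2 - real e) = x powr (real r - real d/2) / x powr (real e)"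
        by (rule powr_diff)
      also have "x powr real e = x ^ e" using xpos by (rule powr_realpow)
      finally show ?thesis unfolding w_def e_def by (simp add: power_one_over)
    qed
    moreover have "real r - real d/2 - real e \<ge> 0" using ineq by linarith
    ultimately show ?thesis using x1 by (simp add: ge_one_powr_ge_zero)
  qed
  have Icube: "I \<subseteq> cube n" by (auto simp: I_def hball_def)
  have "real (Vol_int n r d) = (\<Sum>y\<in>I. 1)" by (simp add: Vol_int_def I_def)
  also have "\<dots> \<le> (\<Sum>y\<in>I. w (T y))" using w1 by (intro sum_mono) auto
  also have "\<dots> \<le> (\<Sum>y\<in>cube n. w (T y))"
    using Icube finite_cube wnn by (intro sum_mono2) auto
  also have "\<dots> = (\<Sum>B\<in>T ` cube n. w B)"
  proof -
    have "inj_on T (cube n)"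
    proof (rule inj_onI)
      fix y z assume yz: "y \<in> cube n" "z \<in> cube n" "T y = T z"
      have "y ! i = z ! i" if "i < n" for i
      proof -
        have "(i \<in> T y) = (i \<in> T z)" using yz by simp
        thus ?thesis using that by (simp add: T_def)
      qed
      thus "y = z" using yz by (intro nth_equalityI) (auto simp: cube_def)
    qed
    thus ?thesis by (simp add: sum.reindex)
  qed
  also have "\<dots> \<le> (\<Sum>B\<in>Pow {..<n}. w B)"
    using wnn by (intro sum_mono2) (auto simp: T_def)
  also have "\<dots> = x powr (real r - real d/2) * (\<Sum>B\<in>Pow {..<n}. (1/x)^card(B - {..<d}))"
    by (simp add: w_def sum_distrib_left)
  also have "\<dots> = x powr (real r - real d/2) * (2 ^ d * (1 + 1/x)^(n-d))"
  proof -
    have "{..<n} \<inter> {..<d} = {..<d}" "{..<n} - {..<d} = {d..<n}" using dn by auto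
    thus ?thesis by (simp add: sum_Pow_card)
  qed
  finally show ?thesis by (simp add: algebra_simps)
qed

lemma vol_lower:
  assumes "r \<le> n"
  shows "n choose r \<le> Vol n r"
proof -
  define G where "G B = map (\<lambda>i. i \<in> B) [0..<n]" for B :: "nat set"
  have "n choose r = card {B. B \<subseteq> {..<n} \<and> card B = r}"
    using n_subsets[of "{..<n}" r] by simp
  also have "\<dots> \<le> card (hball n (replicate n False) r)"
  proof (rule card_inj_on_le)
    show "inj_on G {B. B \<subseteq> {..<n} \<and> card B = r}"
    proof (rule inj_onI)
      fix B C assume BC: "B \<in> {B. B \<subseteq> {..<n} \<and> card B = r}" "C \<in> {B. B \<subseteq> {..<n} \<and> card B = r}" "G B = G C"
      have "(i \<in> B) = (i \<in> C)" for i
      proof (cases "i < n")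
        case True
        have "G B ! i = G C ! i" using BC by simp
        thus ?thesis using True by (simp add: G_def)
      next
        case False
        thus ?thesis using BC by auto
      qed
      thus "B = C" by blast
    qed
    show "G ` {B. B \<subseteq> {..<n} \<and> card B = r} \<subseteq> hball n (replicate n False) r"
    proof
      fix y assume "y \<in> G ` {B. B \<subseteq> {..<n} \<and> card B = r}"
      then obtain B where B: "B \<subseteq> {..<n}" "card B = r" "y = G B" by auto
      have ly: "length y = n" using B by (simp add: G_def)
      have "{i. i < n \<and> y ! i} = B" using B by (auto simp: G_def)
      thus "y \<in> hball n (replicate n False) r"
        using ham0[OF ly] B ly by (simp add: hball_def cube_def)
    qed
    show "finite (hball n (replicate n False) r)"
      using finite_cube by (rule finite_subset[rotated]) (auto simp: hball_def)
  qed
  finally show ?thesis by (simp add: Vol_def)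
qed

lemma key_eq:
  fixes p :: real and n r d :: nat
  assumes p0: "0 < p" and p1: "p < 1" and dn: "d \<le> n" and rn: "r \<le> n"
  shows "2^d * ((1-p)/p) powr (real r - real d/2) * (1 + 1/((1-p)/p))^(n-d) * (p^r * (1-p)^(n-r))
         = (4*p*(1-p)) powr (real d/2)"
proof -
  have q0: "0 < 1 - p" using p1 by simp
  have e: "1 + 1/((1-p)/p) = 1/(1-p)" using p0 q0 by (simp add: field_simps)
  define L where "L = 2^d * ((1-p)/p) powr (real r - real d/2) * (1/(1-p))^(n-d) * (p^r * (1-p)^(n-r))"
  have pos: "0 < L"
    using p0 q0 by (simp add: L_def)
  have l1: "ln L = real d * ln 2 + (real r - real d/2) * (ln (1-p) - ln p) - real (n-d) * ln (1-p)
             + real r * ln p + real (n-r) * ln (1-p)"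
    unfolding L_def using p0 q0
    by (simp add: ln_mult ln_realpow ln_powr ln_div ln_inverse)
  have l2: "ln ((4*p*(1-p)) powr (real d/2)) = real d / 2 * (2 * ln 2 + ln p + ln (1-p))"
  proof -
    have "ln (4::real) = 2 * ln 2" using ln_realpow[of 2 2] by simp
    thus ?thesis using p0 q0 by (simp add: ln_powr ln_mult)
  qed
  have "ln L = ln ((4*p*(1-p)) powr (real d/2))"
    unfolding l1 l2 using dn rn by (simp add: of_nat_diff algebra_simps)
  moreover have pos2: "0 < (4*p*(1-p)) powr (real d/2)" using p0 q0 by simp
  ultimately have "L = (4*p*(1-p)) powr (real d/2)"
    using ln_inj_iff[OF pos pos2] by blast
  thus ?thesis unfolding L_def e .
qed

lemma binom_step_nat: "Suc k * (n choose Suc k) = (n - k) * (n choose k)"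
  using binomial_absorption[of k n] binomial_absorb_comp[of n k] by simp

lemma binom_mode:
  fixes p :: real and n r k :: nat
  assumes p0: "0 < p" and p1: "p < 1" and rdef: "real r = p * real n"
  shows "real (n choose k) * p^k * (1-p)^(n-k) \<le> real (n choose r) * p^r * (1-p)^(n-r)"
proof -
  define P where "P j = real (n choose j) * p^j * (1-p)^(n-j)" for j
  have q0: "0 < 1 - p" using p1 by simp
  have rn: "r \<le> n"
  proof -
    have "p * real n \<le> 1 * real n" using p1 by (intro mult_right_mono) auto
    thus ?thesis using rdef by linarith
  qed
  have step: "P (Suc j) * (real (Suc j) * (1-p)) = P j * (real (n-j) * p)" if "j < n" for j
  proof -
    have h: "real (Suc j) * real (n choose Suc j) = real (n - j) * real (n choose j)"
      using binom_step_nat[of j n] by (metis of_nat_mult)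
    have hq: "(1-p)^(n-j) = (1-p) * (1-p)^(n - Suc j)"
      using that by (simp add: Suc_diff_Suc[symmetric] power_Suc[symmetric] del: power_Suc)
    have "P (Suc j) * (real (Suc j) * (1-p))
          = (real (Suc j) * real (n choose Suc j)) * (p * p^j * ((1-p) * (1-p)^(n - Suc j)))"
      by (simp add: P_def ac_simps)
    also have "\<dots> = (real (n - j) * real (n choose j)) * (p * p^j * (1-p)^(n - j))"
      by (simp only: h hq)
    also have "\<dots> = P j * (real (n-j) * p)"
      by (simp add: P_def ac_simps)
    finally show ?thesis .
  qed
  have Pnn: "P j \<ge> 0" for j using p0 q0 by (simp add: P_def)
  have up: "P j \<le> P (Suc j)" if "j < r" for j
  proof -
    have jn: "j < n" using that rn by simp
    have "real (Suc j) * (1-p) \<le> real (n-j) * p"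
    proof -
      have "real (Suc j) \<le> real r" using that by simp
      hence "real (Suc j) * (1-p) - real (n-j) * p = real (Suc j) - real n * p - p"
        using jn by (simp add: of_nat_diff algebra_simps)
      thus ?thesis using that rdef p0 by (simp add: algebra_simps)
    qed
    hence "P j * (real (Suc j) * (1-p)) \<le> P (Suc j) * (real (Suc j) * (1-p))"
      using step[OF jn] Pnn by (simp add: mult_left_mono)
    thus ?thesis using q0 by (simp add: mult_le_cancel_right)
  qed
  have down: "P (Suc j) \<le> P j" if "r \<le> j" "j < n" for j
  proof -
    have "real (n-j) * p \<le> real (Suc j) * (1-p)"
    proof -
      have "real r \<le> real j" using that by simp
      hence "real (Suc j) * (1-p) - real (n-j) * p = real (Suc j) - real n * p - p"
        using that by (simp add: of_nat_diff algebra_simps)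
      thus ?thesis using that rdef p1 \<open>real r \<le> real j\<close> by (simp add: algebra_simps)
    qed
    hence "P (Suc j) * (real (Suc j) * (1-p)) \<le> P j * (real (Suc j) * (1-p))"
      using step[OF that(2)] Pnn by (simp add: mult_left_mono)
    thus ?thesis using q0 by (simp add: mult_le_cancel_right)
  qed
  have "P k \<le> P r"
  proof (cases "k \<le> r")
    case True
    show ?thesis using True
    proof (induction rule: inc_induct)
      case base show ?case by simp
    next
      case (step m) thus ?case using up[of m] by simp
    qed
  next
    case False
    show ?thesis
    proof (cases "k \<le> n")
      case True
      have "r \<le> k" using False by simp
      thus ?thesis
      proof (induction rule: dec_induct)
        case base show ?case by simp
      next
        case (step m) thus ?case using down[of m] True by simp
      qed
    next
      case False
      hence "P k = 0" by (simp add: P_def)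
      thus ?thesis using Pnn[of r] by simp
    qed
  qed
  thus ?thesis by (simp add: P_def)
qed

lemma binom_mode_lower:
  fixes p :: real and n r :: nat
  assumes p0: "0 < p" and p1: "p < 1" and n0: "0 < n" and rdef: "real r = p * real n"
    and mode: "\<And>k. real (n choose k) * p^k * (1-p)^(n-k) \<le> real (n choose r) * p^r * (1-p)^(n-r)"
  shows "1 / (6 * sqrt (real n)) \<le> real (n choose r) * p^r * (1-p)^(n-r)"
proof -
  define M where "M = real (n choose r) * p^r * (1-p)^(n-r)"
  define X where "X = binomial_pmf n p"
  interpret binomial_distribution n p using p0 p1 by unfold_locales auto
  define A where "A = {x::nat. \<bar>real x - real n * p\<bar> \<ge> sqrt (real n)}"
  define B where "B = {x::nat. \<bar>real x - real n * p\<bar> < sqrt (real n)}"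
  define m where "m = nat \<lfloor>sqrt (real n)\<rfloor>"
  have hA: "measure_pmf.prob X A \<le> 2 * exp (-2 * (sqrt (real n))\<^sup>2 / real n)"
    unfolding X_def A_def by (rule prob_abs_ge[OF n0]) simp
  also have "\<dots> = 2 * exp (-2)" using n0 by simp
  also have "\<dots> \<le> 1/2"
  proof -
    have "2 \<le> exp (1::real)" using exp_ge_add_one_self[of 1] by simp
    hence "2 * 2 \<le> exp (1::real) * exp 1" by (intro mult_mono) auto
    hence "4 \<le> exp (2::real)" by (simp add: exp_add[symmetric])
    thus ?thesis by (simp add: exp_minus field_simps)
  qed
  finally have hA': "measure_pmf.prob X A \<le> 1/2" .
  have Bsub: "B \<subseteq> {r - m .. r + m}"
  proof
    fix x assume "x \<in> B"
    hence hx: "\<bar>real x - real r\<bar> < sqrt (real n)" using rdef by (simp add: B_def algebra_simps)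
    have "real m = of_int \<lfloor>sqrt (real n)\<rfloor>" unfolding m_def by simp
    have "\<bar>int x - int r\<bar> \<le> \<lfloor>sqrt (real n)\<rfloor>"
      using hx by (simp add: le_floor_iff)
    hence "\<bar>int x - int r\<bar> \<le> int m" unfolding m_def by simp
    thus "x \<in> {r - m .. r + m}" by auto
  qed
  have finB: "finite B" using Bsub finite_subset by blast
  have "1 = measure_pmf.prob X (A \<union> B)"
  proof -
    have "A \<union> B = UNIV" by (auto simp: A_def B_def)
    thus ?thesis by simp
  qed
  also have "\<dots> \<le> measure_pmf.prob X A + measure_pmf.prob X B"
    by (rule measure_Un_le) auto
  also have "measure_pmf.prob X B = (\<Sum>k\<in>B. pmf X k)"
    using finB by (rule measure_measure_pmf_finite)
  also have "\<dots> \<le> (\<Sum>k\<in>B. M)"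
    using mode p0 p1 by (intro sum_mono) (simp add: X_def M_def)
  also have "\<dots> = real (card B) * M" by simp
  also have "\<dots> \<le> real (2 * m + 1) * M"
  proof -
    have "card B \<le> card {r - m .. r + m}" using Bsub by (intro card_mono) auto
    also have "\<dots> \<le> 2 * m + 1" by simp
    finally have "real (card B) \<le> real (2 * m + 1)" by linarith
    moreover have "M \<ge> 0" using p0 p1 by (simp add: M_def)
    ultimately show ?thesis by (intro mult_right_mono) auto
  qed
  finally have "1/2 \<le> real (2 * m + 1) * M" using hA' by linarith
  moreover have "real (2 * m + 1) \<le> 3 * sqrt (real n)"
  proof -
    have "real m \<le> sqrt (real n)" unfolding m_def by simp
    moreover have "1 \<le> sqrt (real n)" using n0 by simp
    ultimately show ?thesis by linarith
  qed
  moreover have "M \<ge> 0" using p0 p1 by (simp add: M_def)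
  ultimately have "1/2 \<le> 3 * sqrt (real n) * M"
    by (meson mult_right_mono order_trans)
  moreover have "sqrt (real n) > 0" using n0 by simp
  ultimately show ?thesis unfolding M_def[symmetric] by (simp add: field_simps)
qed

lemma pow_conv:
  fixes y :: real assumes "0 < y"
  shows "2 powr (- ((1/2) * log 2 (1 / y)) * t) = y powr (t/2)"
proof -
  have "log 2 (1/y) = - log 2 y" using assms by (simp add: log_divide)
  hence "2 powr (- ((1/2) * log 2 (1 / y)) * t) = 2 powr (log 2 y * (t/2))" by simp
  also have "\<dots> = (2 powr log 2 y) powr (t/2)" by (simp add: powr_powr)
  also have "\<dots> = y powr (t/2)" using assms by simp
  finally show ?thesis .
qed

theorem lemma9:
  fixes p :: real
  assumes "0 < p" and "p < 1/2"
  shows "\<exists>C > 0. \<exists>N. \<forall>n \<ge> N. \<forall>r :: nat. real r = p * real n \<longrightarrow>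
           (\<forall>d. 1 \<le> d \<and> d \<le> n \<longrightarrow>
              real (Vol_int n r d) / real (Vol n r)
                \<le> 2 powr (- ((1/2) * log 2 (1 / (4 * p * (1 - p)))) * real d) * C * sqrt (real n))"
proof (intro exI[of _ "6::real"] conjI exI[of _ "1::nat"] allI impI)
  fix n r d :: nat
  assume n1: "1 \<le> n" and rdef: "real r = p * real n" and dd: "1 \<le> d \<and> d \<le> n"
  have p0: "0 < p" and p1: "p < 1" using assms by auto
  have q0: "0 < 1 - p" using p1 by simp
  have dn: "d \<le> n" using dd by simp
  have rn: "r \<le> n"
  proof -
    have "p * real n \<le> 1 * real n" using p1 by (intro mult_right_mono) auto
    thus ?thesis using rdef by linarith
  qed
  define x where "x = (1-p)/p"
  have x1: "1 \<le> x" using assms by (simp add: x_def field_simps)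
  define U where "U = 2^d * x powr (real r - real d/2) * (1 + 1/x)^(n-d)"
  define s where "s = p^r * (1-p)^(n-r)"
  define G where "G = (4*p*(1-p)) powr (real d/2)"
  have spos: "0 < s" using p0 q0 by (simp add: s_def)
  have Unn: "0 \<le> U" using x1 by (simp add: U_def)
  have VI: "real (Vol_int n r d) \<le> U" unfolding U_def by (rule vol_int_bound[OF dn x1])
  have UG: "U * s = G" unfolding U_def s_def G_def x_def by (rule key_eq[OF p0 p1 dn rn])
  have mode: "\<And>k. real (n choose k) * p^k * (1-p)^(n-k) \<le> real (n choose r) * p^r * (1-p)^(n-r)"
    by (rule binom_mode[OF p0 p1 rdef])
  have low: "1 / (6 * sqrt (real n)) \<le> real (n choose r) * s"
    using binom_mode_lower[OF p0 p1 _ rdef mode] n1 by (simp add: s_def mult.assoc)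
  have sq: "0 < sqrt (real n)" using n1 by simp
  have low2: "1 \<le> 6 * sqrt (real n) * s * real (n choose r)"
    using low sq by (simp add: field_simps)
  have Cpos: "0 < real (n choose r)" using rn by simp
  have Vge: "real (n choose r) \<le> real (Vol n r)" using vol_lower[OF rn] by simp
  have "real (Vol_int n r d) / real (Vol n r) \<le> U / real (n choose r)"
    using VI Vge Cpos Unn by (meson divide_mono order_trans of_nat_0_le_iff order.refl frac_le)
  also have "\<dots> \<le> U * (6 * sqrt (real n) * s)"
  proof -
    have "U \<le> U * (6 * sqrt (real n) * s * real (n choose r))"
      using Unn low2 by (simp add: mult_le_cancel_left1)
    thus ?thesis using Cpos by (simp add: divide_le_eq ac_simps)
  qed
  also have "\<dots> = G * 6 * sqrt (real n)" using UG by (simp add: ac_simps)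
  also have "G = 2 powr (- ((1/2) * log 2 (1 / (4 * p * (1 - p)))) * real d)"
    unfolding G_def using p0 q0 by (subst pow_conv) auto
  finally show "real (Vol_int n r d) / real (Vol n r)
                \<le> 2 powr (- ((1/2) * log 2 (1 / (4 * p * (1 - p)))) * real d) * 6 * sqrt (real n)" .
qed simp

end
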